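(* Let $|\psi\rangle,|\phi\rangle,|e\rangle,|f\rangle$ be unit vectors in $\mathbb{C}^2$ and let $$\tau=\frac12\left((|\psi\rangle\langle\psi|)^T\otimes|e\rangle\langle e|+(|\phi\rangle\langle\phi|)^T\otimes|f\rangle\langle f|\right).$$ Then the singular values of $N(\tau)$ are $$|\langle\psi|\phi\rangle||\langle e|f\rangle|,\quad\sqrt{(1-|\langle\psi|\phi\rangle|^2)(1-|\langle e|f\rangle|^2)},\quad 0.$$
   Context: $^T$ denotes transpose with respect to the computational basis $\{|0\rangle,|1\rangle\}$. The correlation matrix of an operator $X$ on $\mathbb{C}^2\otimes\mathbb{C}^2$ is the real $3\times3$ matrix $N(X)_{ij}=\operatorname{tr}[X(\sigma_i\otimes\sigma_j)]$, $i,j\in\{1,2,3\}$, with $\sigma_i$ the Pauli matrices. *)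

theory Defs
  imports "Jordan_Normal_Form.Char_Poly" "HOL-Computational_Algebra.Polynomial"
begin

text \<open>Conventions: vectors of \<open>\<complex>\<^sup>2\<close> are JNF vectors of dimension 2, operators are JNF matrices;
  indices start at 0 (computational basis \<open>|0\<rangle>,|1\<rangle>\<close>).\<close>

definition bra_ket :: "complex vec \<Rightarrow> complex vec \<Rightarrow> complex" where
  "bra_ket u v = (\<Sum>i<dim_vec v. cnj (u $ i) * v $ i)"

definition unit_vec2 :: "complex vec \<Rightarrow> bool" where
  "unit_vec2 v \<longleftrightarrow> dim_vec v = 2 \<and> bra_ket v v = 1"

definition ket_bra :: "complex vec \<Rightarrow> complex vec \<Rightarrow> complex mat" where
  "ket_bra u v = mat (dim_vec u) (dim_vec v) (\<lambda>(i,j). u $ i * cnj (v $ j))"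

definition tensor_mat :: "complex mat \<Rightarrow> complex mat \<Rightarrow> complex mat" where
  "tensor_mat A B = mat (dim_row A * dim_row B) (dim_col A * dim_col B)
     (\<lambda>(i,j). A $$ (i div dim_row B, j div dim_col B) * B $$ (i mod dim_row B, j mod dim_col B))"

definition mat_trace :: "complex mat \<Rightarrow> complex" where
  "mat_trace A = (\<Sum>i<dim_row A. A $$ (i,i))"

definition pauli :: "nat \<Rightarrow> complex mat" where
  "pauli k = (if k = 1 then mat_of_rows_list 2 [[0, 1], [1, 0]]
     else if k = 2 then mat_of_rows_list 2 [[0, -\<i>], [\<i>, 0]]
     else mat_of_rows_list 2 [[1, 0], [0, -1]])"

text \<open>Correlation matrix \<open>N(X)_{ij} = tr[X(\<sigma>_i \<otimes> \<sigma>_j)]\<close>, \<open>i,j \<in> {1,2,3}\<close> (stored at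
  0-based positions \<open>i-1, j-1\<close>). The entries are real for Hermitian \<open>X\<close>; we take real parts.\<close>
definition corr_mat :: "complex mat \<Rightarrow> real mat" where
  "corr_mat X = mat 3 3 (\<lambda>(i,j). Re (mat_trace (X * tensor_mat (pauli (i+1)) (pauli (j+1)))))"

definition singular_values :: "real mat \<Rightarrow> real multiset" where
  "singular_values M = image_mset sqrt (proots (char_poly (transpose_mat M * M)))"

end

theory Submission
  imports Defs
begin

definition rb :: "complex vec \<Rightarrow> nat \<Rightarrow> real" where
  "rb u k = (if k = 0 then 2 * (Re (u$0) * Re (u$1) + Im (u$0) * Im (u$1))
     else if k = 1 then 2 * (Re (u$0) * Im (u$1) - Im (u$0) * Re (u$1))
     else (Re (u$0))^2 + (Im (u$0))^2 - (Re (u$1))^2 - (Im (u$1))^2)"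

definition ra :: "complex vec \<Rightarrow> nat \<Rightarrow> real" where
  "ra u k = (if k = 1 then - rb u k else rb u k)"

lemma sum4: "(\<Sum>i<4. g i) = g 0 + g 1 + g 2 + (g (3::nat) :: 'a::comm_monoid_add)"
  by (simp add: eval_nat_numeral)
lemma sum2: "(\<Sum>i<2. g i) = g 0 + (g (1::nat) :: 'a::comm_monoid_add)"
  by (simp add: eval_nat_numeral)

definition pe :: "nat \<Rightarrow> nat \<Rightarrow> nat \<Rightarrow> complex" where
  "pe k a b = (if k = 1 then (if a = b then 0 else 1)
     else if k = 2 then (if a = b then 0 else if a = 0 then -\<i> else \<i>)
     else (if a = b then (if a = 0 then 1 else -1) else 0))"

lemma pauli_idx: "a < 2 \<Longrightarrow> b < 2 \<Longrightarrow> pauli k $$ (a,b) = pe k a b"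
  by (auto simp: pauli_def pe_def mat_of_rows_list_def less_2_cases_iff)

lemma pauli_dim[simp]: "dim_row (pauli k) = 2" "dim_col (pauli k) = 2"
  by (auto simp: pauli_def mat_of_rows_list_def)

lemma tr_tensor:
  assumes "\<tau> \<in> carrier_mat 4 4"
  shows "mat_trace (\<tau> * tensor_mat (pauli k) (pauli l)) =
    (\<Sum>a<4. \<Sum>b<4. \<tau> $$ (a,b) * (pe k (b div 2) (a div 2) * pe l (b mod 2) (a mod 2)))"
  using assms
  by (auto simp: mat_trace_def scalar_prod_def tensor_mat_def pauli_idx intro!: sum.cong)

lemma corr:
  fixes \<psi> \<phi> e f :: "complex vec"
  assumes "dim_vec \<psi> = 2" "dim_vec \<phi> = 2" "dim_vec e = 2" "dim_vec f = 2"
  and "\<tau> = (1/2 :: complex) \<cdot>\<^sub>m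
      (tensor_mat (transpose_mat (ket_bra \<psi> \<psi>)) (ket_bra e e)
       + tensor_mat (transpose_mat (ket_bra \<phi> \<phi>)) (ket_bra f f))"
  and "i < 3" "j < 3"
  shows "Re (mat_trace (\<tau> * tensor_mat (pauli (i+1)) (pauli (j+1))))
     = (ra \<psi> i * rb e j + ra \<phi> i * rb f j) / 2"
proof -
  have c: "\<tau> \<in> carrier_mat 4 4" using assms by (simp add: tensor_mat_def ket_bra_def)
  have ent: "\<tau> $$ (a,b) = (\<psi>$(b div 2) * cnj (\<psi>$(a div 2)) * (e$(a mod 2) * cnj (e$(b mod 2)))
      + \<phi>$(b div 2) * cnj (\<phi>$(a div 2)) * (f$(a mod 2) * cnj (f$(b mod 2)))) / 2"
    if "a < 4" "b < 4" for a b
    using that assms by (simp add: tensor_mat_def ket_bra_def less_mult_imp_div_less)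
  have i: "i = 0 \<or> i = 1 \<or> i = 2" and j: "j = 0 \<or> j = 1 \<or> j = 2" using assms by auto
  show ?thesis using i j
    apply (simp only: tr_tensor[OF c] ent sum4 lessThan_iff)
    apply (elim disjE)
    apply (simp_all add: pe_def ra_def rb_def)
    apply (simp_all add: field_simps power2_eq_square)
    done
qed

lemma sum3: "(\<Sum>i<3. g i) = g 0 + g 1 + (g (2::nat) :: 'a::comm_monoid_add)"
  by (simp add: eval_nat_numeral)

lemma det2: assumes "(A :: 'a :: comm_ring_1 mat) \<in> carrier_mat 2 2"
  shows "det A = A$$(0,0) * A$$(1,1) - A$$(0,1) * A$$(1,0)"
proof -
  have "det A = (\<Sum>j<2. A $$ (0,j) * cofactor A 0 j)"
    by (rule laplace_expansion_row[OF assms]) simp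
  also have "\<dots> = A$$(0,0) * A$$(1,1) - A$$(0,1) * A$$(1,0)"
    using assms unfolding sum2 cofactor_def
    by (subst (1 2) det_single, auto simp: mat_delete_def)
  finally show ?thesis .
qed

lemma det3: assumes "(A :: 'a :: comm_ring_1 mat) \<in> carrier_mat 3 3"
  shows "det A = A$$(0,0) * (A$$(1,1) * A$$(2,2) - A$$(1,2) * A$$(2,1))
     - A$$(0,1) * (A$$(1,0) * A$$(2,2) - A$$(1,2) * A$$(2,0))
     + A$$(0,2) * (A$$(1,0) * A$$(2,1) - A$$(1,1) * A$$(2,0))"
proof -
  have "det A = (\<Sum>j<3. A $$ (0,j) * cofactor A 0 j)"
    by (rule laplace_expansion_row[OF assms]) simp
  also have "\<dots> = A$$(0,0) * (A$$(1,1) * A$$(2,2) - A$$(1,2) * A$$(2,1))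
     - A$$(0,1) * (A$$(1,0) * A$$(2,2) - A$$(1,2) * A$$(2,0))
     + A$$(0,2) * (A$$(1,0) * A$$(2,1) - A$$(1,1) * A$$(2,0))"
    using assms unfolding sum3 cofactor_def
    by (subst (1 2 3) det2, auto simp: mat_delete_def numeral_2_eq_2 algebra_simps)
  finally show ?thesis .
qed

lemma char3: assumes "(S :: real mat) \<in> carrier_mat 3 3"
  shows "poly (char_poly S) t = (t - S$$(0,0)) * ((t - S$$(1,1)) * (t - S$$(2,2)) - S$$(1,2) * S$$(2,1)) - S$$(0,1) * (S$$(1,0) * (t - S$$(2,2)) + S$$(1,2) * S$$(2,0)) - S$$(0,2) * (S$$(1,0) * S$$(2,1) + (t - S$$(1,1)) * S$$(2,0))"
  using assms unfolding char_poly_def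
  by (subst det3, auto simp: char_poly_matrix_def algebra_simps)

lemma char_scaled:
  fixes t g00 g01 g02 g10 g11 g12 g20 g21 g22 :: real
  shows "(t - (g00 / 4)) * ((t - (g11 / 4)) * (t - (g22 / 4)) - (g12 / 4) * (g21 / 4)) - (g01 / 4) * ((g10 / 4) * (t - (g22 / 4)) + (g12 / 4) * (g20 / 4)) - (g02 / 4) * ((g10 / 4) * (g21 / 4) + (t - (g11 / 4)) * (g20 / 4)) = t^3 - (g00 + g11 + g22) / 4 * t^2 + ((g00 * g11 - g01 * g10) + (g00 * g22 - g02 * g20) + (g11 * g22 - g12 * g21)) / 16 * t - (g00 * (g11 * g22 - g12 * g21) - g01 * (g10 * g22 - g12 * g20) + g02 * (g10 * g21 - g11 * g20)) / 64"
  by (simp add: field_simps power2_eq_square power3_eq_cube)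

lemma det_id:
  fixes A C x bA bB bC dA dB dC :: real
  shows "(A * bA * bA + C * dA * dA + x * (bA * dA + dA * bA)) * ((A * bB * bB + C * dB * dB + x * (bB * dB + dB * bB)) * (A * bC * bC + C * dC * dC + x * (bC * dC + dC * bC)) - (A * bB * bC + C * dB * dC + x * (bB * dC + dB * bC)) * (A * bC * bB + C * dC * dB + x * (bC * dB + dC * bB))) - (A * bA * bB + C * dA * dB + x * (bA * dB + dA * bB)) * ((A * bB * bA + C * dB * dA + x * (bB * dA + dB * bA)) * (A * bC * bC + C * dC * dC + x * (bC * dC + dC * bC)) - (A * bB * bC + C * dB * dC + x * (bB * dC + dB * bC)) * (A * bC * bA + C * dC * dA + x * (bC * dA + dC * bA))) + (A * bA * bC + C * dA * dC + x * (bA * dC + dA * bC)) * ((A * bB * bA + C * dB * dA + x * (bB * dA + dB * bA)) * (A * bC * bB + C * dC * dB + x * (bC * dB + dC * bB)) - (A * bB * bB + C * dB * dB + x * (bB * dB + dB * bB)) * (A * bC * bA + C * dC * dA + x * (bC * dA + dC * bA))) = 0"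
  by (simp add: algebra_simps power2_eq_square)

lemma c2_id:
  fixes A C x bA bB bC dA dB dC :: real
  shows "((A * bA * bA + C * dA * dA + x * (bA * dA + dA * bA)) * (A * bB * bB + C * dB * dB + x * (bB * dB + dB * bB)) - (A * bA * bB + C * dA * dB + x * (bA * dB + dA * bB)) * (A * bB * bA + C * dB * dA + x * (bB * dA + dB * bA))) + ((A * bA * bA + C * dA * dA + x * (bA * dA + dA * bA)) * (A * bC * bC + C * dC * dC + x * (bC * dC + dC * bC)) - (A * bA * bC + C * dA * dC + x * (bA * dC + dA * bC)) * (A * bC * bA + C * dC * dA + x * (bC * dA + dC * bA))) + ((A * bB * bB + C * dB * dB + x * (bB * dB + dB * bB)) * (A * bC * bC + C * dC * dC + x * (bC * dC + dC * bC)) - (A * bB * bC + C * dB * dC + x * (bB * dC + dB * bC)) * (A * bC * bB + C * dC * dB + x * (bC * dB + dC * bB))) = (A * C - x^2) * ((bA^2+bB^2+bC^2) * (dA^2+dB^2+dC^2) - (bA*dA+bB*dB+bC*dC)^2)"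
  by (simp add: algebra_simps power2_eq_square)

lemma tr_id:
  fixes A C x bA bB bC dA dB dC :: real
  shows "(A * bA * bA + C * dA * dA + x * (bA * dA + dA * bA)) + (A * bB * bB + C * dB * dB + x * (bB * dB + dB * bB)) + (A * bC * bC + C * dC * dC + x * (bC * dC + dC * bC)) = A * (bA^2+bB^2+bC^2) + C * (dA^2+dB^2+dC^2) + 2 * x * (bA*dA+bB*dB+bC*dC)"
  by (simp add: algebra_simps power2_eq_square)

lemma charS:
  fixes A C x b0 b1 b2 d0 d1 d2 :: real and S :: "real mat"
  assumes "S \<in> carrier_mat 3 3"
  and "\<And>i j. i < 3 \<Longrightarrow> j < 3 \<Longrightarrow> S $$ (i,j) =
     (A * b i * b j + C * d i * d j + x * (b i * d j + d i * b j)) / 4"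
  shows "poly (char_poly S) t = t^3 - (A * (b 0^2+b 1^2+b 2^2) + C * (d 0^2+d 1^2+d 2^2) + 2 * x * (b 0*d 0+b 1*d 1+b 2*d 2)) / 4 * t^2
     + (A * C - x^2) * ((b 0^2+b 1^2+b 2^2) * (d 0^2+d 1^2+d 2^2) - (b 0*d 0+b 1*d 1+b 2*d 2)^2) / 16 * t"
proof -
  have e: "S $$ (i,j) = (A * b i * b j + C * d i * d j + x * (b i * d j + d i * b j)) / 4"
    if "i \<in> {0,1,2}" "j \<in> {0,1,2}" for i j using assms(2) that by auto
  show ?thesis
    unfolding char3[OF assms(1)]
    apply (simp only: e insert_iff simp_thms)
    apply (subst char_scaled)
    apply (subst det_id[where bA="b 0" and bB="b 1" and bC="b 2" and dA="d 0" and dB="d 1" and dC="d 2"])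
    apply (subst c2_id[where bA="b 0" and bB="b 1" and bC="b 2" and dA="d 0" and dB="d 1" and dC="d 2"])
    apply (subst tr_id[where bA="b 0" and bB="b 1" and bC="b 2" and dA="d 0" and dB="d 1" and dC="d 2"])
    apply simp
    done
qed


definition nrm :: "complex vec \<Rightarrow> real" where
  "nrm u = (Re (u$0))^2 + (Im (u$0))^2 + (Re (u$1))^2 + (Im (u$1))^2"

lemma unit_nrm: "unit_vec2 u \<Longrightarrow> nrm u = 1"
proof -
  assume "unit_vec2 u"
  then have "dim_vec u = 2" "bra_ket u u = 1" by (auto simp: unit_vec2_def)
  then have "Re (bra_ket u u) = 1" by simp
  then show ?thesis using \<open>dim_vec u = 2\<close>
    by (simp add: bra_ket_def sum2 nrm_def power2_eq_square)
qed

lemma ra_sq: "ra u 0 ^ 2 + ra u 1 ^ 2 + ra u 2 ^ 2 = nrm u ^ 2"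
  by (simp add: ra_def rb_def nrm_def power2_eq_square algebra_simps)

lemma rb_sq: "rb u 0 ^ 2 + rb u 1 ^ 2 + rb u 2 ^ 2 = nrm u ^ 2"
  by (simp add: rb_def nrm_def power2_eq_square algebra_simps)

lemma rb_dot_gen:
  fixes z w y v :: complex
  shows "2 * (Re z * Re w + Im z * Im w) * (2 * (Re y * Re v + Im y * Im v))
    + 2 * (Re z * Im w - Im z * Re w) * (2 * (Re y * Im v - Im y * Re v))
    + ((Re z)^2 + (Im z)^2 - (Re w)^2 - (Im w)^2) * ((Re y)^2 + (Im y)^2 - (Re v)^2 - (Im v)^2)
    = 2 * (cmod (cnj z * y + cnj w * v))^2 - ((Re z)^2 + (Im z)^2 + (Re w)^2 + (Im w)^2)
       * ((Re y)^2 + (Im y)^2 + (Re v)^2 + (Im v)^2)"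
  unfolding cmod_power2 by (simp add: power2_eq_square algebra_simps)

lemma rb_dot: assumes "dim_vec v = 2"
  shows "rb u 0 * rb v 0 + rb u 1 * rb v 1 + rb u 2 * rb v 2 = 2 * (cmod (bra_ket u v))^2 - nrm u * nrm v"
proof -
  have "bra_ket u v = cnj (u$0) * v$0 + cnj (u$1) * v$1"
    using assms by (simp add: bra_ket_def sum2)
  then show ?thesis
    unfolding rb_def nrm_def using rb_dot_gen[of "u$0" "u$1" "v$0" "v$1"] by simp
qed

lemma ra_dot: assumes "dim_vec v = 2"
  shows "ra u 0 * ra v 0 + ra u 1 * ra v 1 + ra u 2 * ra v 2 = 2 * (cmod (bra_ket u v))^2 - nrm u * nrm v"
  using rb_dot[OF assms, of u] by (simp add: ra_def)

lemma Se_gen: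
  fixes aA aB aC cA cB cC bi bj di dj :: real
  shows "((aA * bi + cA * di) / 2) * ((aA * bj + cA * dj) / 2)
      + ((aB * bi + cB * di) / 2) * ((aB * bj + cB * dj) / 2)
      + ((aC * bi + cC * di) / 2) * ((aC * bj + cC * dj) / 2)
   = ((aA^2 + aB^2 + aC^2) * bi * bj + (cA^2 + cB^2 + cC^2) * di * dj
      + (aA * cA + aB * cB + aC * cC) * (bi * dj + di * bj)) / 4"
  by (simp add: field_simps power2_eq_square)

lemma fin_id:
  fixes t P Q :: real
  shows "t^3 - (1 * 1 + 1 * 1 + 2 * (2 * P - 1) * (2 * Q - 1)) / 4 * t^2
     + (1 * 1 - (2 * P - 1)^2) * (1 * 1 - (2 * Q - 1)^2) / 16 * t
     = t * ((t - P * Q) * (t - (1 - P) * (1 - Q)))"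
  by (simp add: field_simps power2_eq_square power3_eq_cube)

theorem proposition9:
  fixes \<psi> \<phi> e f :: "complex vec"
  assumes "unit_vec2 \<psi>" "unit_vec2 \<phi>" "unit_vec2 e" "unit_vec2 f"
  defines "\<tau> \<equiv> (1/2 :: complex) \<cdot>\<^sub>m
      (tensor_mat (transpose_mat (ket_bra \<psi> \<psi>)) (ket_bra e e)
       + tensor_mat (transpose_mat (ket_bra \<phi> \<phi>)) (ket_bra f f))"
  shows "singular_values (corr_mat \<tau>) =
    {# cmod (bra_ket \<psi> \<phi>) * cmod (bra_ket e f),
       sqrt ((1 - (cmod (bra_ket \<psi> \<phi>))\<^sup>2) * (1 - (cmod (bra_ket e f))\<^sup>2)),
       0 #}"
proof -
  have dims: "dim_vec \<psi> = 2" "dim_vec \<phi> = 2" "dim_vec e = 2" "dim_vec f = 2"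
    using assms(1-4) by (auto simp: unit_vec2_def)
  have nr: "nrm \<psi> = 1" "nrm \<phi> = 1" "nrm e = 1" "nrm f = 1"
    using assms(1-4) by (auto simp: unit_nrm)
  define a where "a = ra \<psi>"
  define c where "c = ra \<phi>"
  define b where "b = rb e"
  define d where "d = rb f"
  define M where "M = corr_mat \<tau>"
  have M: "M = mat 3 3 (\<lambda>(i,j). (a i * b j + c i * d j) / 2)"
    unfolding M_def corr_mat_def a_def b_def c_def d_def
    apply (rule eq_matI)
    apply (simp only: index_mat dim_row_mat dim_col_mat case_prod_conv)
    apply (rule corr[OF dims \<tau>_def[THEN meta_eq_to_obj_eq]]; assumption)
    apply simp_all
    done
  define A where "A = a 0^2 + a 1^2 + a 2^2"
  define C where "C = c 0^2 + c 1^2 + c 2^2"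
  define x where "x = a 0 * c 0 + a 1 * c 1 + a 2 * c 2"
  define y where "y = b 0 * d 0 + b 1 * d 1 + b 2 * d 2"
  have Mc: "M \<in> carrier_mat 3 3" unfolding M by simp
  have Mij: "M $$ (k,i) = (a k * b i + c k * d i) / 2" if "k < 3" "i < 3" for k i
    unfolding M using that by simp
  have Sc: "transpose_mat M * M \<in> carrier_mat 3 3" using Mc by simp
  have Se: "(transpose_mat M * M) $$ (i,j) = (A * b i * b j + C * d i * d j + x * (b i * d j + d i * b j)) / 4"
    if "i < 3" "j < 3" for i j
  proof -
    have "(transpose_mat M * M) $$ (i,j) = ((a 0 * b i + c 0 * d i) / 2) * ((a 0 * b j + c 0 * d j) / 2)
      + ((a 1 * b i + c 1 * d i) / 2) * ((a 1 * b j + c 1 * d j) / 2)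
      + ((a 2 * b i + c 2 * d i) / 2) * ((a 2 * b j + c 2 * d j) / 2)"
    proof -
      have "(transpose_mat M * M) $$ (i,j) = M $$ (0,i) * M $$ (0,j) + M $$ (1,i) * M $$ (1,j) + M $$ (2,i) * M $$ (2,j)"
        using that Mc by (simp add: scalar_prod_def atLeast0LessThan sum3)
      then show ?thesis using that by (simp add: Mij)
    qed
    also have "\<dots> = (A * b i * b j + C * d i * d j + x * (b i * d j + d i * b j)) / 4"
      unfolding A_def C_def x_def by (rule Se_gen)
    finally show ?thesis .
  qed
  have A1: "A = 1" unfolding A_def a_def using ra_sq[of \<psi>] nr by simp
  have C1: "C = 1" unfolding C_def c_def using ra_sq[of \<phi>] nr by simp
  have B1: "b 0^2 + b 1^2 + b 2^2 = 1" unfolding b_def using rb_sq[of e] nr by simp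
  have D1: "d 0^2 + d 1^2 + d 2^2 = 1" unfolding d_def using rb_sq[of f] nr by simp
  define P where "P = (cmod (bra_ket \<psi> \<phi>))^2"
  define Q where "Q = (cmod (bra_ket e f))^2"
  have xP: "x = 2 * P - 1" unfolding x_def a_def c_def P_def using ra_dot[OF dims(2), of \<psi>] nr by simp
  have yQ: "y = 2 * Q - 1" unfolding y_def b_def d_def Q_def using rb_dot[OF dims(4), of e] nr by simp
  define l1 where "l1 = P * Q"
  define l2 where "l2 = (1 - P) * (1 - Q)"
  have "poly (char_poly (transpose_mat M * M)) t = poly ([:0,1:] * ([:-l1,1:] * [:-l2,1:])) t" for t
  proof -
    have "poly (char_poly (transpose_mat M * M)) t = t^3 - (A * 1 + C * 1 + 2 * x * y) / 4 * t^2
     + (A * C - x^2) * (1 * 1 - y^2) / 16 * t"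
      using charS[OF Sc Se, of t] unfolding B1 D1 y_def by simp
    also have "\<dots> = t * ((t - l1) * (t - l2))"
      unfolding A1 C1 xP yQ l1_def l2_def by (rule fin_id)
    also have "\<dots> = poly ([:0,1:] * ([:-l1,1:] * [:-l2,1:])) t"
      by (simp add: algebra_simps)
    finally show ?thesis .
  qed
  then have cp: "char_poly (transpose_mat M * M) = [:0,1:] * ([:-l1,1:] * [:-l2,1:])"
    by (intro poly_ext)
  have pr: "proots (char_poly (transpose_mat M * M)) = {#0, l1, l2#}"
    unfolding cp by (subst proots_mult, simp, simp)+ (simp add: proots_mult)
  have s1: "sqrt l1 = cmod (bra_ket \<psi> \<phi>) * cmod (bra_ket e f)"
    unfolding l1_def P_def Q_def by (simp add: real_sqrt_mult)
  show ?thesis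
    unfolding singular_values_def M_def[symmetric] pr
    by (simp add: s1 l2_def P_def Q_def add_mset_commute)
qed

end
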